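(* Let $(b_n)_{n\ge0}$ be a sequence of real numbers such that (1) $0\le b_n\le 1$ for all $n$; (2) $\limsup_{n\to\infty} b_n<1$; (3) $\sum_{k=0}^n b_kb_{n-k}\to\infty$ as $n\to\infty$. Then there is no set $A\subseteq\mathbb{N}$ such that $$R_A(n)=\sum_{k=0}^n b_kb_{n-k}+o\left(\Big(\sum_{k=0}^n b_kb_{n-k}\Big)^{1/2}\right)\quad (n\to\infty).$$
   Context: $\mathbb{N}$ denotes the set of non-negative integers. For $A\subseteq\mathbb{N}$, $R_A(n)$ denotes the number of ordered pairs $(a,a')$ with $a,a'\in A$ and $a+a'=n$. *)

theory Defs
  imports "HOL-Analysis.Analysis" "HOL-Library.Landau_Symbols"
begin

definition rep_count :: "nat set \<Rightarrow> nat \<Rightarrow> nat" where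
  "rep_count A n = card {(a, a'). a \<in> A \<and> a' \<in> A \<and> a + a' = n}"

definition conv_sq :: "(nat \<Rightarrow> real) \<Rightarrow> nat \<Rightarrow> real" where
  "conv_sq b n = (\<Sum>k=0..n. b k * b (n - k))"

end

theory Submission
  imports Defs "HOL-Computational_Algebra.Polynomial"
begin


lemma summable_sq_pow:
  fixes s :: real assumes "0 \<le> s" "s < 1"
  shows "summable (\<lambda>n. (real n + 1)^2 * s^n)"
proof -
  have 1: "summable (\<lambda>n. (\<lambda>_. 1::real) n * x^n)" if "norm x < 1" for x :: real
    using summable_geometric[OF that] by simp
  have 2: "summable (\<lambda>n. diffs (\<lambda>_. 1::real) n * x^n)" if "norm x < 1" for x :: real
    by (rule termdiff_converges[OF that 1])
  have 3: "summable (\<lambda>n. diffs (diffs (\<lambda>_. 1::real)) n * s^n)"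
    by (rule termdiff_converges[of s 1, OF _ 2]) (use assms in auto)
  have eq: "diffs (diffs (\<lambda>_. 1::real)) n = (real n + 1)*(real n + 2)" for n
    by (simp add: diffs_def algebra_simps)
  show ?thesis
  proof (rule summable_comparison_test[OF _ 3])
    show "\<exists>N. \<forall>n\<ge>N. norm ((real n + 1)\<^sup>2 * s ^ n) \<le> diffs (diffs (\<lambda>_. 1)) n * s ^ n"
      using assms by (auto simp: eq power2_eq_square intro!: exI[of _ 0] mult_right_mono)
  qed
qed

definition ind :: "nat set \<Rightarrow> nat \<Rightarrow> real" where
  "ind A i = (if i \<in> A then 1 else 0)"

lemma rep_count_sum: "real (rep_count A n) = (\<Sum>i\<le>n. ind A i * ind A (n-i))"
proof -
  have "{(a, a'). a \<in> A \<and> a' \<in> A \<and> a + a' = n} = (\<lambda>i. (i, n-i)) ` {i\<in>{..n}. i \<in> A \<and> n-i \<in> A}"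
    by (auto simp: image_iff)
  moreover have "inj_on (\<lambda>i. (i, n-i)) X" for X by (auto simp: inj_on_def)
  ultimately have "rep_count A n = card {i\<in>{..n}. i \<in> A \<and> n-i \<in> A}"
    unfolding rep_count_def by (simp add: card_image)
  also have "real \<dots> = (\<Sum>i\<le>n. if i \<in> A \<and> n-i \<in> A then 1 else 0)"
    by (simp add: sum.If_cases; rule arg_cong[where f=card]; auto)
  finally show ?thesis by (auto simp: ind_def intro!: sum.cong)
qed

lemma cis_sum0:
  fixes N :: nat and m :: int
  assumes "N > 0" "\<not> int N dvd m"
  shows "(\<Sum>j<N. cis (2*pi*real j*m/N)) = 0"
proof -
  define q where "q = cis (2*pi*m/N)"
  have qj: "q^j = cis (2*pi*real j*m/N)" for j
  proof -
    have "q^j = cis (real j * (2*pi*m/N))" by (simp only: q_def Complex.DeMoivre)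
    then show ?thesis by (simp add: algebra_simps)
  qed
  have qN: "q^N = 1"
  proof -
    have "q^N = cis (2*pi*real N*m/N)" by (rule qj)
    also have "\<dots> = cis (2*(pi*real_of_int m))" using assms(1) by simp
    also have "\<dots> = cis (2*pi*real_of_int m)" by (simp only: mult.assoc)
    also have "\<dots> = 1" by (rule cis_multiple_2pi) (rule Ints_of_int)
    finally show ?thesis .
  qed
  have "q \<noteq> 1"
  proof
    assume "q = 1"
    then have "exp (\<i> * complex_of_real (2*pi*m/N)) = 1" by (simp only: q_def cis_conv_exp)
    then obtain n :: int where h: "Im (\<i> * complex_of_real (2*pi*m/N)) = of_int (2*n) * pi"
      unfolding exp_eq_1 by blast
    then have "2*pi*m/N = of_int (2*n) * pi" by simp
    then have "2*pi*m = of_int (2*n) * pi * N" using assms(1) by (simp add: divide_eq_eq)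
    then have "(2*pi) * real_of_int m = (2*pi) * (of_int n * N)" by (simp add: algebra_simps)
    then have "real_of_int m = of_int n * real N" by (simp only: mult_cancel_left) simp
    then have "real_of_int m = real_of_int (n * int N)" by simp
    then have "m = n * int N" by (simp only: of_int_eq_iff)
    with assms(2) show False by simp
  qed
  have "(\<Sum>j<N. cis (2*pi*real j*m/N)) = (\<Sum>j<N. q^j)" by (simp only: qj)
  also have "\<dots> = 0" using \<open>q \<noteq> 1\<close> qN by (simp add: sum_gp_strict)
  finally show ?thesis .
qed


lemma poly_cis_sum:
  fixes p :: "complex poly"
  assumes "degree p < N"
  shows "poly p (cis t) = (\<Sum>k<N. coeff p k * cis (real k * t))"
proof -
  have "poly p (cis t) = (\<Sum>k\<le>degree p. coeff p k * cis t ^ k)" by (rule poly_altdef)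
  also have "\<dots> = (\<Sum>k<N. coeff p k * cis t ^ k)"
    by (rule sum.mono_neutral_left) (use assms in \<open>auto simp: coeff_eq_0\<close>)
  finally show ?thesis by (simp add: Complex.DeMoivre)
qed

lemma cis_orth:
  assumes "k < N" "l < N"
  shows "(\<Sum>j<N. cis (real k * (2*pi*real j/N)) * cis (- (real l * (2*pi*real j/N))))
         = (if k = l then of_nat N else 0)"
proof (cases "k = l")
  case True then show ?thesis by (simp add: cis_mult)
next
  case False
  have N: "N > 0" using assms by simp
  have "\<not> int N dvd (int k - int l)"
  proof
    assume "int N dvd (int k - int l)"
    then obtain c where c: "int k - int l = int N * c" by (auto simp: dvd_def)
    have "c = 0"
    proof (rule ccontr)
      assume "c \<noteq> 0"
      then have "\<bar>c\<bar> \<ge> 1" by simp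
      then have "\<bar>int N * c\<bar> \<ge> int N" by (simp add: abs_mult mult_le_cancel_left1)
      with c assms show False by linarith
    qed
    with c False show False by simp
  qed
  then have "(\<Sum>j<N. cis (2*pi*real j*real_of_int (int k - int l)/N)) = 0"
    by (rule cis_sum0[OF N])
  moreover have "cis (real k * (2*pi*real j/N)) * cis (- (real l * (2*pi*real j/N)))
      = cis (2*pi*real j*real_of_int (int k - int l)/N)" for j
    by (simp add: cis_mult algebra_simps diff_divide_distrib)
  ultimately show ?thesis using False by simp
qed

lemma parseval:
  fixes p :: "complex poly"
  assumes "degree p < N"
  shows "(\<Sum>j<N. (cmod (poly p (cis (2*pi*real j/N))))^2) = N * (\<Sum>k<N. (cmod (coeff p k))^2)"
proof -
  define c where "c = coeff p"
  define \<theta> where "\<theta> j = 2*pi*real j/N" for j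
  define E where "E k l j = cis (real k * \<theta> j) * cis (- (real l * \<theta> j))" for k l j
  have "complex_of_real (\<Sum>j<N. (cmod (poly p (cis (\<theta> j))))^2)
     = (\<Sum>j<N. poly p (cis (\<theta> j)) * cnj (poly p (cis (\<theta> j))))"
    by (simp only: of_real_sum complex_norm_square)
  also have "\<dots> = (\<Sum>j<N. (\<Sum>k<N. c k * cis (real k * \<theta> j)) * (\<Sum>l<N. cnj (c l) * cis (- (real l * \<theta> j))))"
    by (simp add: poly_cis_sum[OF assms] c_def cis_cnj)
  also have "\<dots> = (\<Sum>j<N. \<Sum>k<N. \<Sum>l<N. (c k * cnj (c l)) * E k l j)"
    unfolding sum_product E_def by (intro sum.cong refl) (simp only: mult_ac)
  also have "\<dots> = (\<Sum>k<N. \<Sum>j<N. \<Sum>l<N. (c k * cnj (c l)) * E k l j)"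
    by (rule sum.swap)
  also have "\<dots> = (\<Sum>k<N. \<Sum>l<N. \<Sum>j<N. (c k * cnj (c l)) * E k l j)"
    by (rule sum.cong[OF refl]) (rule sum.swap)
  also have "\<dots> = (\<Sum>k<N. \<Sum>l<N. (c k * cnj (c l)) * (\<Sum>j<N. E k l j))"
    by (simp only: sum_distrib_left)
  also have "\<dots> = (\<Sum>k<N. \<Sum>l<N. (if l = k then of_nat N * (c k * cnj (c k)) else 0))"
  proof (intro sum.cong refl)
    fix k l assume "k \<in> {..<N}" "l \<in> {..<N}"
    then have "(\<Sum>j<N. E k l j) = (if k = l then of_nat N else 0)"
      unfolding E_def \<theta>_def by (intro cis_orth) auto
    then show "(c k * cnj (c l)) * (\<Sum>j<N. E k l j) = (if l = k then of_nat N * (c k * cnj (c k)) else 0)"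
      by auto
  qed
  also have "\<dots> = (\<Sum>k<N. of_nat N * (c k * cnj (c k)))"
    by (intro sum.cong refl) (simp only: sum.delta finite_lessThan, simp)
  also have "\<dots> = complex_of_real (N * (\<Sum>k<N. (cmod (c k))^2))"
    by (simp only: of_real_mult of_real_sum of_real_of_nat_eq complex_norm_square sum_distrib_left)
  finally show ?thesis unfolding \<theta>_def c_def of_real_eq_iff .
qed



lemma fourier_ineq:
  fixes p q :: "complex poly"
  assumes "degree p < N" "degree q < N" "degree (p*p - q*q) < N"
  shows "(\<Sum>k<N. (cmod (coeff p k))^2) \<le> (\<Sum>k<N. (cmod (coeff q k))^2)
           + sqrt (\<Sum>n<N. (cmod (coeff (p*p-q*q) n))^2)"
proof -
  define D where "D = p*p - q*q"
  define z where "z j = cis (2*pi*real j/N)" for j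
  have N: "N > 0" using assms by simp
  have pw: "(cmod (poly p (z j)))^2 \<le> (cmod (poly q (z j)))^2 + cmod (poly D (z j))" for j
  proof -
    have "(cmod (poly p (z j)))^2 = cmod ((poly q (z j))^2 + poly D (z j))"
      by (simp add: D_def norm_power power2_eq_square norm_mult)
    also have "\<dots> \<le> cmod ((poly q (z j))^2) + cmod (poly D (z j))" by (rule norm_triangle_ineq)
    finally show ?thesis by (simp add: norm_power)
  qed
  have s1: "(\<Sum>j<N. (cmod (poly p (z j)))^2) \<le> (\<Sum>j<N. (cmod (poly q (z j)))^2) + (\<Sum>j<N. cmod (poly D (z j)))"
    unfolding sum.distrib[symmetric] by (rule sum_mono) (rule pw)
  have cs: "(\<Sum>j<N. cmod (poly D (z j) ) * 1)^2 \<le> (\<Sum>j<N. (cmod (poly D (z j)))^2) * (\<Sum>j<N. 1^2)"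
    by (rule Cauchy_Schwarz_ineq_sum)
  define T where "T = (\<Sum>n<N. (cmod (coeff D n))^2)"
  have T0: "T \<ge> 0" unfolding T_def by (simp add: sum_nonneg)
  have pD: "(\<Sum>j<N. (cmod (poly D (z j)))^2) = real N * T"
    unfolding T_def z_def D_def by (rule parseval) (use assms(3) in simp)
  have "(\<Sum>j<N. cmod (poly D (z j)))^2 \<le> (real N * T) * real N"
    using cs unfolding pD by simp
  also have "\<dots> = (real N * sqrt T)^2"
    using T0 by (simp add: power_mult_distrib power2_eq_square)
  finally have "(\<Sum>j<N. cmod (poly D (z j)))^2 \<le> (real N * sqrt T)^2" .
  then have s2: "(\<Sum>j<N. cmod (poly D (z j))) \<le> real N * sqrt T"
    by (rule power2_le_imp_le) (use T0 in simp)
  define SP where "SP = (\<Sum>k<N. (cmod (coeff p k))^2)"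
  define SQ where "SQ = (\<Sum>k<N. (cmod (coeff q k))^2)"
  have pp: "(\<Sum>j<N. (cmod (poly p (z j)))^2) = real N * SP"
    unfolding SP_def z_def by (rule parseval[OF assms(1)])
  have pq: "(\<Sum>j<N. (cmod (poly q (z j)))^2) = real N * SQ"
    unfolding SQ_def z_def by (rule parseval[OF assms(2)])
  have "real N * SP \<le> real N * (SQ + sqrt T)"
    using s1 s2 unfolding pp pq distrib_left by linarith
  then have "SP \<le> SQ + sqrt T" using N by (simp add: mult_le_cancel_left_pos)
  then show ?thesis unfolding SP_def SQ_def T_def D_def .
qed



definition trunc :: "nat \<Rightarrow> real \<Rightarrow> (nat \<Rightarrow> real) \<Rightarrow> nat \<Rightarrow> real" where
  "trunc M r u k = (if k < M then u k * r^k else 0)"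

definition tpoly :: "nat \<Rightarrow> real \<Rightarrow> (nat \<Rightarrow> real) \<Rightarrow> complex poly" where
  "tpoly M r u = (\<Sum>k<M. monom (complex_of_real (u k * r^k)) k)"

lemma coeff_tpoly: "coeff (tpoly M r u) n = complex_of_real (trunc M r u n)"
  unfolding tpoly_def trunc_def by (simp add: coeff_sum coeff_monom)

lemma degree_tpoly: "M > 0 \<Longrightarrow> degree (tpoly M r u) \<le> M - 1"
  by (rule degree_le) (auto simp: coeff_tpoly trunc_def)

lemma trunc_prod_bounds:
  assumes "\<And>k. 0 \<le> u k \<and> u k \<le> 1" "0 \<le> r" "i \<le> n"
  shows "0 \<le> trunc M r u i * trunc M r u (n-i) \<and> trunc M r u i * trunc M r u (n-i) \<le> r^n"
proof -
  have rn: "r^i * r^(n-i) = r^n" using assms(3) by (simp add: power_add[symmetric])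
  have "u i * u (n-i) \<le> 1" using assms(1)[of i] assms(1)[of "n-i"] by (simp add: mult_le_one)
  then have "(u i * u (n-i)) * r^n \<le> 1 * r^n" using assms(2) by (intro mult_right_mono) auto
  moreover have "trunc M r u i * trunc M r u (n-i) = (if i < M \<and> n - i < M then (u i * u (n-i)) * r^n else 0)"
    unfolding trunc_def using rn by (auto simp: algebra_simps)
  ultimately show ?thesis using assms(1)[of i] assms(1)[of "n-i"] assms(2) by auto
qed

lemma trunc_prod_small:
  assumes "i \<le> n" "n < M"
  shows "trunc M r u i * trunc M r u (n-i) = u i * u (n-i) * r^n"
proof -
  have rn: "r^i * r^(n-i) = r^n" using assms(1) by (simp add: power_add[symmetric])
  show ?thesis unfolding trunc_def using assms rn by (auto simp: algebra_simps)
qed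

lemma fourier_app:
  fixes A :: "nat set" and b :: "nat \<Rightarrow> real" and s :: real
  assumes b: "\<And>n. 0 \<le> b n \<and> b n \<le> 1" and s: "0 \<le> s" and M: "M > 0"
  shows "(\<Sum>k<M. ind A k * s^k) \<le> (\<Sum>k<M. (b k)^2 * s^k)
     + sqrt ((\<Sum>n<M. (real (rep_count A n) - conv_sq b n)^2 * s^n) + (\<Sum>n\<in>{M..<2*M}. (real n + 1)^2 * s^n))"
proof -
  define r where "r = sqrt s"
  have r0: "r \<ge> 0" unfolding r_def using s by simp
  have rs: "r^(2*k) = s^k" for k unfolding r_def power_mult using s by simp
  have babs: "\<bar>b k\<bar> = b k" for k using b[of k] by simp
  have ia: "\<And>k. 0 \<le> ind A k \<and> ind A k \<le> 1" by (simp add: ind_def)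
  define p where "p = tpoly M r (ind A)"
  define q where "q = tpoly M r b"
  define d where "d n = (\<Sum>i\<le>n. trunc M r (ind A) i * trunc M r (ind A) (n-i) - trunc M r b i * trunc M r b (n-i))" for n
  have dp: "degree p < 2*M" unfolding p_def using degree_tpoly[OF M, of r "ind A"] M by linarith
  have dq: "degree q < 2*M" unfolding q_def using degree_tpoly[OF M, of r b] M by linarith
  have dD: "degree (p*p - q*q) < 2*M"
  proof -
    have "degree (p*p) \<le> 2*(M-1)" using degree_mult_le[of p p] degree_tpoly[OF M, of r "ind A"] unfolding p_def by linarith
    moreover have "degree (q*q) \<le> 2*(M-1)" using degree_mult_le[of q q] degree_tpoly[OF M, of r b] unfolding q_def by linarith
    ultimately have "degree (p*p - q*q) \<le> 2*(M-1)" by (rule degree_diff_le)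
    then show ?thesis using M by linarith
  qed
  have cD: "coeff (p*p - q*q) n = complex_of_real (d n)" for n
    unfolding p_def q_def d_def by (simp add: coeff_mult coeff_tpoly sum_subtractf)
  note fi = fourier_ineq[OF dp dq dD]
  have L: "(\<Sum>k<2*M. (cmod (coeff p k))^2) = (\<Sum>k<M. ind A k * s^k)"
  proof -
    have "(\<Sum>k<2*M. (cmod (coeff p k))^2) = (\<Sum>k<M. (cmod (coeff p k))^2)"
      by (rule sum.mono_neutral_right) (auto simp: p_def coeff_tpoly trunc_def)
    also have "\<dots> = (\<Sum>k<M. ind A k * s^k)"
      by (intro sum.cong refl) (auto simp: p_def coeff_tpoly trunc_def ind_def power2_eq_square
            rs[symmetric] power_add[symmetric] mult_2 abs_mult r0 norm_power abs_of_nonneg[OF r0])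
    finally show ?thesis .
  qed
  have R1: "(\<Sum>k<2*M. (cmod (coeff q k))^2) = (\<Sum>k<M. (b k)^2 * s^k)"
  proof -
    have "(\<Sum>k<2*M. (cmod (coeff q k))^2) = (\<Sum>k<M. (cmod (coeff q k))^2)"
      by (rule sum.mono_neutral_right) (auto simp: q_def coeff_tpoly trunc_def)
    also have "\<dots> = (\<Sum>k<M. (b k)^2 * s^k)"
      by (intro sum.cong refl) (auto simp: q_def coeff_tpoly trunc_def norm_mult norm_power abs_of_nonneg[OF r0] babs power2_eq_square rs[symmetric] mult_2 mult_2_right power_add mult_ac)
    finally show ?thesis .
  qed
  have dsmall: "d n = r^n * (real (rep_count A n) - conv_sq b n)" if "n < M" for n
  proof -
    have "d n = (\<Sum>i\<le>n. ind A i * ind A (n-i) * r^n - b i * b (n-i) * r^n)"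
      unfolding d_def using that by (intro sum.cong refl) (simp add: trunc_prod_small)
    also have "\<dots> = r^n * ((\<Sum>i\<le>n. ind A i * ind A (n-i)) - (\<Sum>i\<le>n. b i * b (n-i)))"
      by (simp add: sum_subtractf sum_distrib_left algebra_simps)
    finally show ?thesis by (simp add: rep_count_sum conv_sq_def atLeast0AtMost)
  qed
  have dbound: "\<bar>d n\<bar> \<le> (real n + 1) * r^n" for n
  proof -
    have "\<bar>d n\<bar> \<le> (\<Sum>i\<le>n. \<bar>trunc M r (ind A) i * trunc M r (ind A) (n-i) - trunc M r b i * trunc M r b (n-i)\<bar>)"
      unfolding d_def by (rule sum_abs)
    also have "\<dots> \<le> (\<Sum>i\<le>n. r^n)"
    proof (rule sum_mono)
      fix i assume "i \<in> {..n}"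
      then have "i \<le> n" by simp
      from trunc_prod_bounds[where u="ind A" and M=M, OF ia r0 this] trunc_prod_bounds[where u=b and M=M, OF b r0 this]
      show "\<bar>trunc M r (ind A) i * trunc M r (ind A) (n-i) - trunc M r b i * trunc M r b (n-i)\<bar> \<le> r^n"
        by linarith
    qed
    finally show ?thesis by (simp add: algebra_simps)
  qed
  have R2: "(\<Sum>n<2*M. (cmod (coeff (p*p-q*q) n))^2) \<le>
      (\<Sum>n<M. (real (rep_count A n) - conv_sq b n)^2 * s^n) + (\<Sum>n\<in>{M..<2*M}. (real n + 1)^2 * s^n)"
  proof -
    have split: "{..<2*M} = {..<M} \<union> {M..<2*M}" by auto
    have "(\<Sum>n<2*M. (cmod (coeff (p*p-q*q) n))^2) = (\<Sum>n<M. (d n)^2) + (\<Sum>n\<in>{M..<2*M}. (d n)^2)"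
      unfolding split cD norm_of_real power2_abs by (subst sum.union_disjoint) auto
    also have "(\<Sum>n<M. (d n)^2) = (\<Sum>n<M. (real (rep_count A n) - conv_sq b n)^2 * s^n)"
      by (intro sum.cong refl) (simp add: dsmall power_mult_distrib rs[symmetric] mult.commute power_mult[symmetric])
    also have "(\<Sum>n\<in>{M..<2*M}. (d n)^2) \<le> (\<Sum>n\<in>{M..<2*M}. (real n + 1)^2 * s^n)"
    proof (rule sum_mono)
      fix n
      have "(d n)^2 = \<bar>d n\<bar>^2" by simp
      also have "\<dots> \<le> ((real n + 1) * r^n)^2" using dbound[of n] by (intro power_mono) auto
      also have "\<dots> = (real n + 1)^2 * s^n" by (simp add: power_mult_distrib rs[symmetric] power_mult[symmetric] mult.commute)
      finally show "(d n)^2 \<le> (real n + 1)^2 * s^n" .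
    qed
    finally show ?thesis by simp
  qed
  show ?thesis
    using fi L R1 R2 real_sqrt_le_mono[OF R2] by linarith
qed



lemma summ_bound:
  fixes f :: "nat \<Rightarrow> real"
  assumes "\<And>n. \<bar>f n\<bar> \<le> (real n + 1)^2" "0 \<le> s" "s < 1"
  shows "summable (\<lambda>n. f n * s^n)"
proof (rule summable_comparison_test[OF _ summable_sq_pow[OF assms(2,3)]])
  show "\<exists>N. \<forall>n\<ge>N. norm (f n * s ^ n) \<le> (real n + 1)\<^sup>2 * s ^ n"
    using assms(1,2) by (auto simp: abs_mult intro!: exI[of _ 0] mult_right_mono)
qed

lemma summ_bound':
  fixes f :: "nat \<Rightarrow> real"
  assumes "\<And>n. 0 \<le> f n" "\<And>n. f n \<le> real n + 1" "0 \<le> s" "s < 1"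
  shows "summable (\<lambda>n. f n * s^n)"
proof (rule summ_bound[OF _ assms(3,4)])
  fix n
  have "f n \<le> (real n + 1) * 1" using assms(2)[of n] by simp
  also have "\<dots> \<le> (real n + 1) * (real n + 1)" by (intro mult_left_mono) auto
  finally show "\<bar>f n\<bar> \<le> (real n + 1)^2" using assms(1)[of n] by (simp add: power2_eq_square)
qed

lemma ind_bounds: "0 \<le> ind A n \<and> ind A n \<le> 1" by (simp add: ind_def)

lemma conv_bounds:
  fixes b :: "nat \<Rightarrow> real"
  assumes "\<And>n. 0 \<le> b n \<and> b n \<le> 1"
  shows "0 \<le> (\<Sum>i\<le>n. b i * b (n-i)) \<and> (\<Sum>i\<le>n. b i * b (n-i)) \<le> real n + 1"
proof
  show "0 \<le> (\<Sum>i\<le>n. b i * b (n-i))" using assms by (intro sum_nonneg) auto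
  have "(\<Sum>i\<le>n. b i * b (n-i)) \<le> (\<Sum>i\<le>n. 1)"
    using assms by (intro sum_mono) (simp add: mult_le_one)
  then show "(\<Sum>i\<le>n. b i * b (n-i)) \<le> real n + 1" by simp
qed

lemma cauchy_sq:
  fixes b :: "nat \<Rightarrow> real" and s :: real
  assumes "\<And>n. 0 \<le> b n \<and> b n \<le> 1" "0 \<le> s" "s < 1"
  shows "(\<Sum>n. b n * s^n)^2 = (\<Sum>n. (\<Sum>i\<le>n. b i * b (n-i)) * s^n)"
proof -
  have sb: "summable (\<lambda>n. norm (b n * s^n))"
  proof -
    have "summable (\<lambda>n. b n * s^n)"
      by (rule summ_bound[OF _ assms(2,3)]) (use assms(1) in \<open>auto intro: order_trans[of _ 1]\<close>)
    then show ?thesis using assms(1,2) by (simp add: abs_mult)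
  qed
  have "(\<Sum>n. b n * s^n)^2 = (\<Sum>n. \<Sum>i\<le>n. (b i * s^i) * (b (n-i) * s^(n-i)))"
    unfolding power2_eq_square by (rule Cauchy_product[OF sb sb])
  also have "\<dots> = (\<Sum>n. (\<Sum>i\<le>n. b i * b (n-i)) * s^n)"
  proof (rule suminf_cong)
    fix n
    have "(\<Sum>i\<le>n. (b i * s^i) * (b (n-i) * s^(n-i))) = (\<Sum>i\<le>n. (b i * b (n-i)) * s^n)"
    proof (rule sum.cong[OF refl])
      fix i assume "i \<in> {..n}"
      then have "s^i * s^(n-i) = s^n" by (simp add: power_add[symmetric])
      then show "(b i * s^i) * (b (n-i) * s^(n-i)) = (b i * b (n-i)) * s^n"
        by (metis mult.assoc mult.left_commute)
    qed
    then show "(\<Sum>i\<le>n. (b i * s^i) * (b (n-i) * s^(n-i))) = (\<Sum>i\<le>n. b i * b (n-i)) * s^n"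
      by (simp add: sum_distrib_right)
  qed
  finally show ?thesis .
qed

lemma inf_fourier:
  fixes A :: "nat set" and b :: "nat \<Rightarrow> real" and s :: real
  assumes b: "\<And>n. 0 \<le> b n \<and> b n \<le> 1" and s: "0 \<le> s" "s < 1"
  shows "(\<Sum>n. ind A n * s^n) \<le> (\<Sum>n. (b n)^2 * s^n)
     + sqrt (\<Sum>n. (real (rep_count A n) - conv_sq b n)^2 * s^n)"
proof -
  define e where "e n = real (rep_count A n) - conv_sq b n" for n
  define g where "g n = (real n + 1)^2 * s^n" for n
  have eb: "\<bar>(e n)^2\<bar> \<le> (real n + 1)^2" for n
  proof -
    have r: "0 \<le> real (rep_count A n) \<and> real (rep_count A n) \<le> real n + 1"
      using conv_bounds[of "ind A" n] ind_bounds by (simp add: rep_count_sum)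
    have c: "0 \<le> conv_sq b n \<and> conv_sq b n \<le> real n + 1"
      using conv_bounds[of b n] b by (simp add: conv_sq_def atLeast0AtMost)
    have "\<bar>e n\<bar> \<le> real n + 1" unfolding e_def using r c by linarith
    then have "\<bar>e n\<bar>^2 \<le> (real n + 1)^2" by (intro power_mono) auto
    then show ?thesis by simp
  qed
  have sg: "summable g" unfolding g_def by (rule summable_sq_pow[OF s])
  have sa: "summable (\<lambda>n. ind A n * s^n)"
    by (rule summ_bound[OF _ s]) (use ind_bounds in \<open>auto intro: order_trans[of _ 1]\<close>)
  have sb: "summable (\<lambda>n. (b n)^2 * s^n)"
  proof (rule summ_bound[OF _ s])
    fix n have "\<bar>(b n)^2\<bar> \<le> 1" using b[of n] by (simp add: abs_le_iff power_le_one)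
    also have "1 \<le> (real n + 1)^2" by simp
    finally show "\<bar>(b n)^2\<bar> \<le> (real n + 1)^2" .
  qed
  have se: "summable (\<lambda>n. (e n)^2 * s^n)" by (rule summ_bound[OF eb s])
  define X where "X = (\<Sum>n. ind A n * s^n)"
  define Z where "Z = (\<Sum>n. (b n)^2 * s^n)"
  define W where "W = (\<Sum>n. (e n)^2 * s^n)"
  define G where "G M = (\<Sum>n<M. g n)" for M
  have G1: "G \<longlonglongrightarrow> suminf g" unfolding G_def by (rule summable_LIMSEQ[OF sg])
  have G2: "(\<lambda>M. G (2*M)) \<longlonglongrightarrow> suminf g"
    using LIMSEQ_subseq_LIMSEQ[OF G1, of "\<lambda>M. 2*M"] by (simp add: strict_mono_def o_def)
  have T0: "(\<lambda>M. G (2*M) - G M) \<longlonglongrightarrow> 0"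
    using tendsto_diff[OF G2 G1] by simp
  have GT: "G (2*M) - G M = (\<Sum>n\<in>{M..<2*M}. g n)" for M
  proof -
    have "{..<2*M} = {..<M} \<union> {M..<2*M}" by auto
    then have "G (2*M) = G M + (\<Sum>n\<in>{M..<2*M}. g n)"
      unfolding G_def by (simp only: \<open>{..<2*M} = {..<M} \<union> {M..<2*M}\<close>) (rule sum.union_disjoint, auto)
    then show ?thesis by simp
  qed
  have lhs: "(\<lambda>M. \<Sum>k<M. ind A k * s^k) \<longlonglongrightarrow> X" unfolding X_def by (rule summable_LIMSEQ[OF sa])
  have rhs: "(\<lambda>M. Z + sqrt (W + (G (2*M) - G M))) \<longlonglongrightarrow> Z + sqrt (W + 0)"
    by (intro tendsto_intros T0)
  have "X \<le> Z + sqrt (W + 0)"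
  proof (rule LIMSEQ_le[OF lhs rhs], intro exI[of _ 1] allI impI)
    fix M :: nat assume M: "M \<ge> 1"
    have z: "(\<Sum>k<M. (b k)^2 * s^k) \<le> Z"
      unfolding Z_def using s by (intro sum_le_suminf[OF sb]) auto
    have w: "(\<Sum>n<M. (e n)^2 * s^n) \<le> W"
      unfolding W_def using s by (intro sum_le_suminf[OF se]) auto
    have sq: "sqrt ((\<Sum>n<M. (e n)^2 * s^n) + (\<Sum>n\<in>{M..<2*M}. g n)) \<le> sqrt (W + (G (2*M) - G M))"
      using w unfolding GT by (simp only: real_sqrt_le_iff add_le_cancel_right)
    have fa: "(\<Sum>k<M. ind A k * s^k) \<le> (\<Sum>k<M. (b k)^2 * s^k) + sqrt ((\<Sum>n<M. (e n)^2 * s^n) + (\<Sum>n\<in>{M..<2*M}. g n))"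
      using fourier_app[where A=A and b=b and s=s and M=M, OF b s(1)] M unfolding e_def g_def by simp
    show "(\<Sum>k<M. ind A k * s^k) \<le> Z + sqrt (W + (G (2*M) - G M))"
      using fa z sq by linarith
  qed
  then show ?thesis unfolding X_def Z_def W_def e_def by simp
qed


theorem theorem9:
  fixes b :: "nat \<Rightarrow> real"
  assumes "\<And>n. 0 \<le> b n \<and> b n \<le> 1"
    and "limsup (\<lambda>n. ereal (b n)) < 1"
    and "filterlim (conv_sq b) at_top sequentially"
  shows "\<not> (\<exists>A :: nat set.
           (\<lambda>n. real (rep_count A n) - conv_sq b n) \<in> o(\<lambda>n. sqrt (conv_sq b n)))"
proof
  assume "\<exists>A :: nat set. (\<lambda>n. real (rep_count A n) - conv_sq b n) \<in> o(\<lambda>n. sqrt (conv_sq b n))"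
  then obtain A :: "nat set" where o: "(\<lambda>n. real (rep_count A n) - conv_sq b n) \<in> o(\<lambda>n. sqrt (conv_sq b n))"
    by blast
  note b = assms(1)
  define c where "c = conv_sq b"
  define e where "e n = real (rep_count A n) - c n" for n
  have c_eq: "c n = (\<Sum>i\<le>n. b i * b (n-i))" for n
    unfolding c_def conv_sq_def by (simp add: atLeast0AtMost)
  have c0: "0 \<le> c n" and c1: "c n \<le> real n + 1" for n
    using conv_bounds[of b n] b c_eq by auto
  have R_eq: "real (rep_count A n) = (\<Sum>i\<le>n. ind A i * ind A (n-i))" for n by (rule rep_count_sum)
  have R0: "0 \<le> real (rep_count A n)" and R1: "real (rep_count A n) \<le> real n + 1" for n
    using conv_bounds[of "ind A" n] ind_bounds R_eq by auto
  obtain y :: ereal where y: "limsup (\<lambda>n. ereal (b n)) < y" "y < 1" using dense[OF assms(2)] by blast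
  have ev1: "eventually (\<lambda>n. ereal (b n) < y) sequentially" using Limsup_lessD[OF y(1)] by simp
  obtain \<beta> where \<beta>: "\<beta> < 1" "0 \<le> \<beta>" "eventually (\<lambda>n. b n \<le> \<beta>) sequentially"
  proof (cases y)
    case (real r)
    have "r < 1" using y(2) real by simp
    moreover have "eventually (\<lambda>n. b n \<le> max r 0) sequentially"
      using ev1 by eventually_elim (use real in auto)
    ultimately show thesis by (intro that[of "max r 0"]) auto
  next
    case PInf then show thesis using y(2) by simp
  next
    case MInf then show thesis using y(1) by simp
  qed
  obtain n0 where n0: "\<And>n. n \<ge> n0 \<Longrightarrow> b n \<le> \<beta>" using \<beta>(3) by (auto simp: eventually_sequentially)
  define \<epsilon> where "\<epsilon> = (1 - \<beta>) / 4"
  have \<epsilon>0: "\<epsilon> > 0" using \<beta> by (simp add: \<epsilon>_def)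
  have ev2: "eventually (\<lambda>n. norm (e n) \<le> \<epsilon> * norm (sqrt (c n))) sequentially"
    using landau_o.smallD[OF o \<epsilon>0] unfolding e_def c_def .
  have ev3: "eventually (\<lambda>n. 1 \<le> c n) sequentially"
    using assms(3) unfolding c_def filterlim_at_top by blast
  obtain N1 where N1: "\<And>n. n \<ge> N1 \<Longrightarrow> norm (e n) \<le> \<epsilon> * norm (sqrt (c n)) \<and> 1 \<le> c n"
    using eventually_conj[OF ev2 ev3] by (auto simp: eventually_sequentially)
  have eN1: "\<bar>e n\<bar> \<le> \<epsilon> * c n" and eN2: "(e n)^2 \<le> \<epsilon>^2 * c n" if "n \<ge> N1" for n
  proof -
    have h: "\<bar>e n\<bar> \<le> \<epsilon> * sqrt (c n)" "1 \<le> c n" using N1[OF that] c0[of n] by auto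
    have "sqrt (c n) \<ge> 1" using h(2) by simp
    then have "sqrt (c n) * 1 \<le> sqrt (c n) * sqrt (c n)" by (intro mult_left_mono) auto
    also have "\<dots> = c n" using c0[of n] by simp
    finally have "sqrt (c n) \<le> c n" by simp
    then have "\<epsilon> * sqrt (c n) \<le> \<epsilon> * c n" using \<epsilon>0 by (intro mult_left_mono) auto
    then show "\<bar>e n\<bar> \<le> \<epsilon> * c n" using h(1) by linarith
    have "(e n)^2 = \<bar>e n\<bar>^2" by simp
    also have "\<dots> \<le> (\<epsilon> * sqrt (c n))^2" using h(1) by (intro power_mono) auto
    also have "\<dots> = \<epsilon>^2 * c n" using c0[of n] by (simp add: power_mult_distrib)
    finally show "(e n)^2 \<le> \<epsilon>^2 * c n" .
  qed
  define K1 where "K1 = (\<Sum>n<N1. (e n)^2)"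
  define K2 where "K2 = (\<Sum>n<N1. \<bar>e n\<bar>)"
  define C where "C = real n0 + sqrt K1"
  have K10: "K1 \<ge> 0" unfolding K1_def by (simp add: sum_nonneg)
  have K20: "K2 \<ge> 0" unfolding K2_def by (simp add: sum_nonneg)
  have C0: "C \<ge> 0" unfolding C_def using K10 by simp
  have ebound: "\<bar>e n\<bar> \<le> real n + 1" for n unfolding e_def using c0[of n] c1[of n] R0[of n] R1[of n] by linarith
  have key: "2*\<epsilon>*(\<Sum>n. b n * s^n)^2 \<le> K2 + C^2 + 2*C*(\<Sum>n. b n * s^n) \<and> 0 \<le> (\<Sum>n. b n * s^n)
     \<and> (\<Sum>n. b n * s^n)^2 = (\<Sum>n. c n * s^n) \<and> summable (\<lambda>n. c n * s^n)"
    if s: "0 \<le> s" "s < 1" for s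
  proof -
    have sp: "0 \<le> s^n" "s^n \<le> 1" for n using s by (auto simp: power_le_one)
    have b1: "b n \<le> real n + 1" for n using b[of n] by linarith
    have i1: "ind A n \<le> real n + 1" for n using ind_bounds[of A n] by linarith
    have bb0: "0 \<le> (b n)^2" for n by simp
    have bb1: "(b n)^2 \<le> real n + 1" for n
    proof -
      have "(b n)^2 \<le> 1" using b[of n] by (simp add: power_le_one)
      then show ?thesis by linarith
    qed
    have sY: "summable (\<lambda>n. b n * s^n)"
      by (rule summ_bound'[OF _ b1 s]) (use b in auto)
    have sX: "summable (\<lambda>n. ind A n * s^n)"
      by (rule summ_bound'[OF _ i1 s]) (use ind_bounds in auto)
    have sZ: "summable (\<lambda>n. (b n)^2 * s^n)"
      by (rule summ_bound'[OF bb0 bb1 s])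
    have sV: "summable (\<lambda>n. c n * s^n)"
      by (rule summ_bound'[OF c0 c1 s])
    have sU: "summable (\<lambda>n. real (rep_count A n) * s^n)"
      by (rule summ_bound'[OF R0 R1 s])
    have sW: "summable (\<lambda>n. (e n)^2 * s^n)"
    proof (rule summ_bound[OF _ s])
      fix n have "\<bar>e n\<bar>^2 \<le> (real n + 1)^2" using ebound[of n] by (intro power_mono) auto
      then show "\<bar>(e n)^2\<bar> \<le> (real n + 1)^2" by simp
    qed
    define Y where "Y = (\<Sum>n. b n * s^n)"
    define X where "X = (\<Sum>n. ind A n * s^n)"
    define Z where "Z = (\<Sum>n. (b n)^2 * s^n)"
    define V where "V = (\<Sum>n. c n * s^n)"
    define U where "U = (\<Sum>n. real (rep_count A n) * s^n)"
    define W where "W = (\<Sum>n. (e n)^2 * s^n)"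
    have Y0: "Y \<ge> 0" unfolding Y_def using b sp by (intro suminf_nonneg[OF sY]) auto
    have X0: "X \<ge> 0" unfolding X_def using ind_bounds sp by (intro suminf_nonneg[OF sX]) auto
    have YV: "Y^2 = V" unfolding Y_def V_def c_eq by (rule cauchy_sq[OF b s])
    have XU: "X^2 = U" unfolding X_def U_def R_eq by (rule cauchy_sq[OF ind_bounds s])
    have XF: "X \<le> Z + sqrt W" unfolding X_def Z_def W_def e_def c_def by (rule inf_fourier[OF b s])
    have fin1: "summable (\<lambda>n. if n < n0 then (1::real) else 0)" "(\<Sum>n. if n < n0 then (1::real) else 0) = real n0"
    proof -
      have "(\<lambda>n. if n < n0 then (1::real) else 0) sums (\<Sum>n\<in>{..<n0}. if n < n0 then (1::real) else 0)"
        by (rule sums_finite) auto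
      then show "summable (\<lambda>n. if n < n0 then (1::real) else 0)" "(\<Sum>n. if n < n0 then (1::real) else 0) = real n0"
        by (auto simp: sums_iff)
    qed
    have "Z \<le> (\<Sum>n. \<beta> * (b n * s^n) + (if n < n0 then 1 else 0))"
      unfolding Z_def
    proof (rule suminf_le[OF _ sZ])
      show "summable (\<lambda>n. \<beta> * (b n * s^n) + (if n < n0 then 1 else 0))"
        by (intro summable_add summable_mult sY fin1(1))
      fix n
      show "(b n)^2 * s^n \<le> \<beta> * (b n * s^n) + (if n < n0 then 1 else 0)"
      proof (cases "n < n0")
        case True
        have "(b n)^2 * s^n \<le> 1 * 1" using b[of n] sp[of n] by (intro mult_mono) (auto simp: power_le_one)
        moreover have "0 \<le> \<beta> * (b n * s^n)" using \<beta>(2) b[of n] sp[of n] by simp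
        ultimately show ?thesis using True by simp
      next
        case False
        have "(b n)^2 \<le> \<beta> * b n" using n0[of n] False b[of n] by (simp add: power2_eq_square mult_right_mono)
        then have "(b n)^2 * s^n \<le> (\<beta> * b n) * s^n" using sp(1)[of n] by (rule mult_right_mono)
        then show ?thesis using False by (simp add: mult.assoc)
      qed
    qed
    also have "\<dots> = \<beta> * Y + real n0"
      unfolding Y_def using suminf_add[OF summable_mult[OF sY, of \<beta>] fin1(1)] suminf_mult[OF sY, of \<beta>] fin1(2)
      by simp
    finally have ZY: "Z \<le> \<beta> * Y + real n0" .
    have fin2: "summable (\<lambda>n. if n < N1 then (e n)^2 else 0)" "(\<Sum>n. if n < N1 then (e n)^2 else 0) = K1"
    proof -
      have "(\<lambda>n. if n < N1 then (e n)^2 else 0) sums (\<Sum>n\<in>{..<N1}. if n < N1 then (e n)^2 else 0)"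
        by (rule sums_finite) auto
      then show "summable (\<lambda>n. if n < N1 then (e n)^2 else 0)" "(\<Sum>n. if n < N1 then (e n)^2 else 0) = K1"
        by (auto simp: sums_iff K1_def)
    qed
    have "W \<le> (\<Sum>n. (if n < N1 then (e n)^2 else 0) + \<epsilon>^2 * (c n * s^n))"
      unfolding W_def
    proof (rule suminf_le[OF _ sW])
      show "summable (\<lambda>n. (if n < N1 then (e n)^2 else 0) + \<epsilon>^2 * (c n * s^n))"
        by (intro summable_add summable_mult sV fin2(1))
      fix n
      show "(e n)^2 * s^n \<le> (if n < N1 then (e n)^2 else 0) + \<epsilon>^2 * (c n * s^n)"
      proof (cases "n < N1")
        case True
        have "(e n)^2 * s^n \<le> (e n)^2 * 1" using sp[of n] by (intro mult_left_mono) auto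
        moreover have "0 \<le> \<epsilon>^2 * (c n * s^n)" using c0[of n] sp[of n] by simp
        ultimately show ?thesis using True by simp
      next
        case False
        have "(e n)^2 * s^n \<le> (\<epsilon>^2 * c n) * s^n" using eN2[of n] False sp[of n] by (intro mult_right_mono) auto
        then show ?thesis using False by (simp add: mult.assoc)
      qed
    qed
    also have "\<dots> = K1 + \<epsilon>^2 * V"
      unfolding V_def using suminf_add[OF fin2(1) summable_mult[OF sV, of "\<epsilon>^2"]] suminf_mult[OF sV, of "\<epsilon>^2"] fin2(2)
      by simp
    finally have WV: "W \<le> K1 + \<epsilon>^2 * V" .
    have fin3: "summable (\<lambda>n. if n < N1 then \<bar>e n\<bar> else 0)" "(\<Sum>n. if n < N1 then \<bar>e n\<bar> else 0) = K2"
    proof -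
      have "(\<lambda>n. if n < N1 then \<bar>e n\<bar> else 0) sums (\<Sum>n\<in>{..<N1}. if n < N1 then \<bar>e n\<bar> else 0)"
        by (rule sums_finite) auto
      then show "summable (\<lambda>n. if n < N1 then \<bar>e n\<bar> else 0)" "(\<Sum>n. if n < N1 then \<bar>e n\<bar> else 0) = K2"
        by (auto simp: sums_iff K2_def)
    qed
    have "(\<Sum>n. (1 - \<epsilon>) * (c n * s^n) - (if n < N1 then \<bar>e n\<bar> else 0)) \<le> U"
      unfolding U_def
    proof (rule suminf_le[OF _ _ sU])
      show "summable (\<lambda>n. (1 - \<epsilon>) * (c n * s^n) - (if n < N1 then \<bar>e n\<bar> else 0))"
        by (intro summable_diff summable_mult sV fin3(1))
      fix n
      have Rn: "real (rep_count A n) = c n + e n" unfolding e_def by simp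
      show "(1 - \<epsilon>) * (c n * s^n) - (if n < N1 then \<bar>e n\<bar> else 0) \<le> real (rep_count A n) * s^n"
      proof (cases "n < N1")
        case True
        have "- \<bar>e n\<bar> \<le> e n * s^n"
        proof -
          have "\<bar>e n\<bar> * \<bar>s^n\<bar> \<le> \<bar>e n\<bar> * 1" using sp[of n] by (intro mult_left_mono) auto
          then have "\<bar>e n * s^n\<bar> \<le> \<bar>e n\<bar> * 1" by (simp only: abs_mult)
          then show ?thesis by linarith
        qed
        moreover have "\<epsilon> * (c n * s^n) \<ge> 0" using \<epsilon>0 c0[of n] sp[of n] by simp
        ultimately show ?thesis using True unfolding Rn by (simp add: algebra_simps)
      next
        case False
        have "- (\<epsilon> * c n) * s^n \<le> e n * s^n" using eN1[of n] False sp[of n] by (intro mult_right_mono) auto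
        then show ?thesis using False unfolding Rn by (simp add: algebra_simps)
      qed
    qed
    also note XU[symmetric]
    finally have "(\<Sum>n. (1 - \<epsilon>) * (c n * s^n) - (if n < N1 then \<bar>e n\<bar> else 0)) \<le> X^2" .
    moreover have "(\<Sum>n. (1 - \<epsilon>) * (c n * s^n) - (if n < N1 then \<bar>e n\<bar> else 0)) = (1 - \<epsilon>) * V - K2"
      unfolding V_def using suminf_diff[OF summable_mult[OF sV, of "1 - \<epsilon>"] fin3(1)] suminf_mult[OF sV, of "1 - \<epsilon>"] fin3(2)
      by simp
    ultimately have UV: "(1 - \<epsilon>) * Y^2 - K2 \<le> X^2" unfolding YV by simp
    have "W \<le> (sqrt K1 + \<epsilon> * Y)^2"
    proof -
      have "W \<le> K1 + \<epsilon>^2 * Y^2" using WV YV by simp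
      also have "\<dots> \<le> K1 + \<epsilon>^2 * Y^2 + 2 * sqrt K1 * (\<epsilon> * Y)" using K10 \<epsilon>0 Y0 by simp
      also have "\<dots> = (sqrt K1 + \<epsilon> * Y)^2" using K10 by (simp add: power2_sum power_mult_distrib)
      finally show ?thesis .
    qed
    then have "sqrt W \<le> sqrt K1 + \<epsilon> * Y"
      using K10 \<epsilon>0 Y0 by (metis real_sqrt_le_mono real_sqrt_abs abs_of_nonneg add_nonneg_nonneg
             mult_nonneg_nonneg real_sqrt_ge_zero less_imp_le)
    then have XB: "X \<le> C + (\<beta> + \<epsilon>) * Y" using XF ZY unfolding C_def by (simp add: algebra_simps)
    define t where "t = \<beta> + \<epsilon>"
    have t: "t = 1 - 3 * \<epsilon>" "0 \<le> t" "t \<le> 1" using \<beta>(1,2) unfolding t_def \<epsilon>_def by (auto simp: field_simps)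
    have "X^2 \<le> (C + t * Y)^2" using XB X0 unfolding t_def by (intro power_mono) auto
    also have "\<dots> = C^2 + 2 * (t * (C * Y)) + (t * t) * Y^2" by (simp add: power2_eq_square algebra_simps)
    also have "\<dots> \<le> C^2 + 2 * (1 * (C * Y)) + t * Y^2"
    proof -
      have "t * (C * Y) \<le> 1 * (C * Y)" using t C0 Y0 by (intro mult_right_mono) auto
      moreover have "(t * t) * Y^2 \<le> (t * 1) * Y^2" using t by (intro mult_right_mono mult_left_mono) auto
      ultimately show ?thesis by simp
    qed
    finally have "(1 - \<epsilon>) * Y^2 - K2 \<le> C^2 + 2 * (C * Y) + (1 - 3 * \<epsilon>) * Y^2" using UV t(1) by simp
    then have "2 * \<epsilon> * Y^2 \<le> K2 + C^2 + 2 * C * Y" by (simp add: algebra_simps)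
    then show ?thesis using Y0 YV sV unfolding Y_def V_def by simp
  qed
  define T where "T = max 1 ((K2 + C^2 + 2 * C) / \<epsilon> + 1)"
  obtain n where n: "c n \<ge> 2 * T^2"
    using assms(3) unfolding c_def filterlim_at_top eventually_sequentially by blast
  define s where "s = 1 - 1 / (2 * real n + 2)"
  have s: "0 \<le> s" "s < 1" unfolding s_def by (auto simp: field_simps)
  have sn: "s^n \<ge> 1/2"
  proof -
    define x where "x = - 1 / (2 * real n + 2)"
    have sx: "s = 1 + x" unfolding s_def x_def by simp
    have "-1 \<le> x" unfolding x_def by (simp add: field_simps)
    then have "1 + real n * x \<le> (1 + x)^n" by (rule Bernoulli_inequality)
    moreover have "1/2 \<le> 1 + real n * x" unfolding x_def by (simp add: field_simps)
    ultimately show ?thesis unfolding sx by linarith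
  qed
  define Y where "Y = (\<Sum>n. b n * s^n)"
  have kk: "2*\<epsilon>*Y^2 \<le> K2 + C^2 + 2*C*Y" "0 \<le> Y" "Y^2 = (\<Sum>n. c n * s^n)" "summable (\<lambda>n. c n * s^n)"
    using key[OF s] unfolding Y_def by auto
  have "c n * s^n \<le> (\<Sum>n. c n * s^n)"
  proof -
    have "(\<Sum>i\<in>{n}. c i * s^i) \<le> (\<Sum>n. c n * s^n)"
      by (rule sum_le_suminf[OF kk(4)]) (use c0 s in auto)
    then show ?thesis by simp
  qed
  moreover have "2 * T^2 * (1/2) \<le> c n * s^n" using n sn c0[of n] by (intro mult_mono) auto
  ultimately have "T^2 \<le> Y^2" using kk(3) by simp
  then have YT: "T \<le> Y" using kk(2) by (rule power2_le_imp_le)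
  have T1: "1 \<le> T" and T2: "(K2 + C^2 + 2 * C) / \<epsilon> + 1 \<le> T" unfolding T_def by auto
  have Y1: "1 \<le> Y" using YT T1 by simp
  have "\<epsilon> * ((K2 + C^2 + 2 * C) / \<epsilon> + 1) \<le> \<epsilon> * Y" using T2 YT \<epsilon>0 by simp
  moreover have "\<epsilon> * ((K2 + C^2 + 2 * C) / \<epsilon> + 1) = K2 + C^2 + 2 * C + \<epsilon>"
  proof -
    define Q where "Q = K2 + C^2 + 2 * C"
    have "\<epsilon> * (Q / \<epsilon> + 1) = Q + \<epsilon>" using \<epsilon>0 by (simp add: distrib_left)
    then show ?thesis unfolding Q_def .
  qed
  ultimately have eY: "K2 + C^2 + 2 * C + \<epsilon> \<le> \<epsilon> * Y" by simp
  have f1: "(K2 + C^2 + 2 * C + \<epsilon>) * Y \<le> \<epsilon> * Y^2"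
  proof -
    have "(K2 + C^2 + 2 * C + \<epsilon>) * Y \<le> (\<epsilon> * Y) * Y" using eY Y1 by (intro mult_right_mono) auto
    then show ?thesis by (simp add: power2_eq_square mult.assoc)
  qed
  have f2: "K2 + C^2 + 2 * C * Y + \<epsilon> \<le> (K2 + C^2 + 2 * C + \<epsilon>) * Y"
  proof -
    have "(K2 + C^2) * 1 \<le> (K2 + C^2) * Y" using Y1 K20 by (intro mult_left_mono) auto
    moreover have "\<epsilon> * 1 \<le> \<epsilon> * Y" using Y1 \<epsilon>0 by (intro mult_left_mono) auto
    ultimately show ?thesis by (simp add: algebra_simps)
  qed
  have f3: "\<epsilon> \<le> \<epsilon> * Y^2"
  proof -
    have "1 * 1 \<le> Y * Y" using Y1 by (intro mult_mono) auto
    then show ?thesis using \<epsilon>0 by (simp add: power2_eq_square)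
  qed
  have "K2 + C^2 + 2 * C * Y < 2 * (\<epsilon> * Y^2)" using f1 f2 f3 \<epsilon>0 by linarith
  then have "K2 + C^2 + 2 * C * Y < 2 * \<epsilon> * Y^2" by (simp add: mult.assoc)
  with kk(1) show False by simp
qed

end
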